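(* Let $q$ be a prime power. There exists a $2$-code of $\mathcal H_{3,q^2}$ of size $q^6 + \frac{q(q-1)(q^4+q^2+1)}{2}$.
   Context: $\mathcal H_{3,q^2}$ is the set of $3\times 3$ Hermitian matrices over ${\rm GF}(q^2)$ (matrices $A=(a_{ij})$ with $a_{ji}=a_{ij}^q$), with rank distance $d_r(A,B)={\rm rk}(A-B)$. A $2$-code is a non-empty subset whose minimum distance $\min\{{\rm rk}(c_1-c_2): c_1\neq c_2\}$ equals $2$. *)

theory Defs
  imports "Jordan_Normal_Form.DL_Rank"
begin

text \<open>3x3 Hermitian matrices over a field F of order q^2: a_ji = a_ij^q.\<close>
definition hermitian3 :: "nat \<Rightarrow> ('a::field) mat set" where
  "hermitian3 q = {A. A \<in> carrier_mat 3 3 \<and>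
     (\<forall>i<3. \<forall>j<3. A $$ (j, i) = (A $$ (i, j)) ^ q)}"

definition rank_dist :: "('a::field) mat \<Rightarrow> 'a mat \<Rightarrow> nat" where
  "rank_dist A B = vec_space.rank 3 (A - B)"

definition is_herm_code :: "nat \<Rightarrow> nat \<Rightarrow> ('a::field) mat set \<Rightarrow> bool" where
  "is_herm_code q d C \<longleftrightarrow> C \<noteq> {} \<and> C \<subseteq> hermitian3 q \<and>
     (\<forall>c1\<in>C. \<forall>c2\<in>C. c1 \<noteq> c2 \<longrightarrow> rank_dist c1 c2 \<ge> d) \<and>
     (\<exists>c1\<in>C. \<exists>c2\<in>C. c1 \<noteq> c2 \<and> rank_dist c1 c2 = d)"

end

theory Submission
  imports Defs "Jordan_Normal_Form.DL_Rank_Submatrix" "HOL-Computational_Algebra.Primes"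
    "HOL-Computational_Algebra.Polynomial" "HOL-Number_Theory.Residues"
begin

lemma pow_card_same:
  fixes x :: "'a :: {finite,field}"
  shows "x ^ card (UNIV :: 'a set) = x"
proof (cases "x = 0")
  case False
  have "x * (\<Prod>y\<in>UNIV-{0}. x * y) = x * x ^ (card (UNIV :: 'a set) - 1) * \<Prod>(UNIV-{0})"
    by (simp add: prod.distrib mult_ac)
  also have "x * x ^ (card (UNIV :: 'a set) - 1) = x ^ Suc (card (UNIV :: 'a set) - 1)"
    by (subst power_Suc) auto
  also have "Suc (card (UNIV :: 'a set) - 1) = card (UNIV :: 'a set)"
    using finite_UNIV_card_ge_0[where ?'a = 'a] by simp
  also have "(\<Prod>y\<in>UNIV-{0}. x * y) = (\<Prod>y\<in>UNIV-{0}. y)"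
    by (rule prod.reindex_bij_witness[of _ "\<lambda>y. y / x" "\<lambda>y. x * y"]) (use False in auto)
  finally show ?thesis
    by simp
qed (use finite_UNIV_card_ge_0[where ?'a = 'a] in auto)

lemma frob_facts:
  fixes q :: nat
  assumes "prime p" "k \<ge> 1" "q = p ^ k"
    and card: "card (UNIV :: 'a::{finite,field} set) = q ^ 2"
  shows "\<forall>x y::'a. (x + y) ^ q = x ^ q + y ^ q" "\<forall>x::'a. (x ^ q) ^ q = x" "q \<ge> 2"
proof -
  have fin: "finite (UNIV :: 'a set)" by simp
  have cp: "prime CHAR('a)"
    using prime_CHAR_semidom[where ?'a='a] finite_imp_CHAR_pos[OF fin] by simp
  have "CHAR('a) dvd p ^ (2*k)"
    using CHAR_dvd_CARD[where ?'a='a] card assms(3) by (simp add: power_mult mult.commute)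
  hence "CHAR('a) dvd p" using cp prime_dvd_power by blast
  hence ch: "CHAR('a) = p" using cp assms(1) primes_dvd_imp_eq by blast
  show "\<forall>x y::'a. (x + y) ^ q = x ^ q + y ^ q"
    using freshmans_dream'[of q k] cp ch assms(3) by auto
  show "\<forall>x::'a. (x ^ q) ^ q = x"
    using pow_card_same[where ?'a='a] card by (simp add: power_mult[symmetric] power2_eq_square)
  have "p \<ge> 2" using assms(1) prime_ge_2_nat by blast
  moreover have "p \<le> p ^ k" using assms(2) \<open>p \<ge> 2\<close> by (intro self_le_power) auto
  ultimately show "q \<ge> 2" using assms(3) by simp
qed


definition trq :: "nat \<Rightarrow> 'a::field \<Rightarrow> 'a" where "trq q a = a + a ^ q"
definition phq :: "nat \<Rightarrow> 'a::field \<Rightarrow> 'a" where "phq q a = - (a ^ q)"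
definition repq :: "nat \<Rightarrow> 'a::field \<Rightarrow> 'a" where "repq q a = (SOME b. b \<in> {a, phq q a})"
definition Uq :: "nat \<Rightarrow> 'a::field set" where "Uq q = {a. trq q a \<noteq> 0 \<and> repq q a = a}"

definition mkm :: "nat \<Rightarrow> (nat \<Rightarrow> 'a::field) \<Rightarrow> 'a \<Rightarrow> 'a \<Rightarrow> 'a \<Rightarrow> 'a mat" where
  "mkm q d x y z = mat 3 3 (\<lambda>(i,j). if i = j then d i else
      if (i,j) = (0,1) then x else if (i,j) = (1,0) then x ^ q else
      if (i,j) = (0,2) then y else if (i,j) = (2,0) then y ^ q else
      if (i,j) = (1,2) then z else z ^ q)"

lemma mkm_carrier: "mkm q d x y z \<in> carrier_mat 3 3" by (simp add: mkm_def)

lemma mkm_idx: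
  "mkm q d x y z $$ (0,0) = d 0" "mkm q d x y z $$ (1,1) = d 1" "mkm q d x y z $$ (2,2) = d 2"
  "mkm q d x y z $$ (0,1) = x" "mkm q d x y z $$ (1,0) = x ^ q"
  "mkm q d x y z $$ (0,2) = y" "mkm q d x y z $$ (2,0) = y ^ q"
  "mkm q d x y z $$ (1,2) = z" "mkm q d x y z $$ (2,1) = z ^ q"
  by (simp_all add: mkm_def)

lemma mkm_idx':
  "mkm q d x y z $$ (Suc 0,Suc 0) = d (Suc 0)"
  "mkm q d x y z $$ (0,Suc 0) = x" "mkm q d x y z $$ (Suc 0,0) = x ^ q"
  "mkm q d x y z $$ (Suc 0,2) = z" "mkm q d x y z $$ (2,Suc 0) = z ^ q"
  "mkm q d x y z $$ (2,Suc (Suc 0)) = d 2"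
  by (simp_all add: mkm_def)

lemma less3_cases: "(i::nat) < 3 \<Longrightarrow> i = 0 \<or> i = 1 \<or> i = 2" by auto

lemma det2: assumes "(A::'a::comm_ring_1 mat) \<in> carrier_mat 2 2"
  shows "det A = A$$(0,0) * A$$(1,1) - A$$(0,1) * A$$(1,0)"
proof -
  have "det A = (\<Sum>i<2. A $$ (i,0) * cofactor A i 0)"
    by (rule laplace_expansion_column[OF assms]) simp
  also have "\<dots> = A$$(0,0) * cofactor A 0 0 + A$$(1,0) * cofactor A 1 0"
    by (simp add: numeral_2_eq_2)
  also have "cofactor A 0 0 = A$$(1,1)"
    using assms unfolding cofactor_def
    by (subst det_single) (auto simp: mat_delete_def)
  also have "cofactor A 1 0 = - A$$(0,1)"
    using assms unfolding cofactor_def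
    by (subst det_single) (auto simp: mat_delete_def)
  finally show ?thesis by (simp add: algebra_simps)
qed

lemma pick_two:
  assumes "(a::nat) < b"
  shows "pick {a,b} 0 = a" "pick {a,b} 1 = b"
proof -
  show p0: "pick {a,b} 0 = a" unfolding pick.simps by (rule Least_equality) (use assms in auto)
  have "pick {a,b} (Suc 0) = b" unfolding pick.simps(2) p0 by (rule Least_equality) (use assms in auto)
  thus "pick {a,b} 1 = b" by simp
qed

lemma minor_rank:
  fixes M :: "'a::field mat"
  assumes M: "M \<in> carrier_mat 3 3" and ab: "a < b" "b < 3"
    and nz: "M $$ (a,a) * M $$ (b,b) - M $$ (a,b) * M $$ (b,a) \<noteq> 0"
  shows "2 \<le> vec_space.rank 3 M"
proof -
  have set: "{j. j < (3::nat) \<and> j \<in> {a,b}} = {a,b}" using ab by auto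
  have c2: "card {j. j < (3::nat) \<and> j \<in> {a,b}} = 2" unfolding set using ab by simp
  have dr: "dim_row M = 3" "dim_col M = 3" using M by auto
  let ?S = "submatrix M {a,b} {a,b}"
  have "dim_row ?S = 2" "dim_col ?S = 2" unfolding dim_submatrix dr c2 by simp_all
  hence Sc: "?S \<in> carrier_mat 2 2" by (intro carrier_matI)
  have Si: "?S $$ (i,j) = M $$ (pick {a,b} i, pick {a,b} j)" if "i < 2" "j < 2" for i j
    by (rule submatrix_index) (use that c2 dr in simp_all)
  have "det ?S = ?S $$ (0,0) * ?S $$ (1,1) - ?S $$ (0,1) * ?S $$ (1,0)" by (rule det2[OF Sc])
  also have "\<dots> = M $$ (a,a) * M $$ (b,b) - M $$ (a,b) * M $$ (b,a)"
    using Si[of 0 0] Si[of 0 1] Si[of 1 0] Si[of 1 1] pick_two[OF ab(1)] by simp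
  finally have "det ?S \<noteq> 0" using nz by simp
  from vec_space.rank_gt_minor[OF M this] show ?thesis unfolding c2 .
qed

lemma rank_mkm:
  fixes d :: "nat \<Rightarrow> 'a::field"
  assumes "d 0 * d 1 - x * x ^ q \<noteq> 0 \<or> d 0 * d 2 - y * y ^ q \<noteq> 0 \<or> d 1 * d 2 - z * z ^ q \<noteq> 0"
  shows "2 \<le> vec_space.rank 3 (mkm q d x y z)"
proof -
  from assms consider (a) "d 0 * d 1 - x * x ^ q \<noteq> 0" | (b) "d 0 * d 2 - y * y ^ q \<noteq> 0"
    | (c) "d 1 * d 2 - z * z ^ q \<noteq> 0" by blast
  then show ?thesis
  proof cases
    case a
    show ?thesis by (rule minor_rank[OF mkm_carrier, of 0 1]) (use a in \<open>simp_all only: mkm_idx\<close>, simp)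
  next
    case b
    show ?thesis by (rule minor_rank[OF mkm_carrier, of 0 2]) (use b in \<open>simp_all only: mkm_idx\<close>, simp)
  next
    case c
    show ?thesis by (rule minor_rank[OF mkm_carrier, of 1 2]) (use c in \<open>simp_all only: mkm_idx\<close>, simp)
  qed
qed


context
  fixes q :: nat
  assumes FA: "\<And>x y::'a::field. (x + y) ^ q = x ^ q + y ^ q"
    and FI: "\<And>x::'a. (x ^ q) ^ q = x"
    and Q1: "q \<ge> 1"
begin

lemma fr_zero: "(0::'a) ^ q = 0" using Q1 by simp
lemma fr_neg: "(- x :: 'a) ^ q = - (x ^ q)"
proof -
  have "x ^ q + (- x) ^ q = 0" using FA[of x "-x"] fr_zero by simp
  thus ?thesis by (simp add: eq_neg_iff_add_eq_0 add.commute)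
qed
lemma fr_diff: "(x - y :: 'a) ^ q = x ^ q - y ^ q"
  using FA[of x "-y"] fr_neg[of y] by simp
lemma fr_eq0: "((x::'a) ^ q = 0) = (x = 0)" using Q1 by simp
lemma trq_fix: "(trq q (a::'a)) ^ q = trq q a"
  unfolding trq_def using FA FI by (simp add: add.commute)
lemma phq_phq: "phq q (phq q (a::'a)) = a"
  unfolding phq_def using fr_neg FI by simp
lemma trq_phq: "trq q (phq q (a::'a)) = - trq q a"
  unfolding trq_def phq_def using fr_neg FI by simp
lemma repq_phq: "repq q (phq q (a::'a)) = repq q a"
  unfolding repq_def phq_phq by (metis insert_commute)
lemma repq_in: "repq q (a::'a) \<in> {a, phq q a}"
  unfolding repq_def by (rule someI[of _ a]) simp
lemma U_tr: "(a::'a) \<in> Uq q \<Longrightarrow> trq q a \<noteq> 0" unfolding Uq_def by simp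
lemma U_ph: assumes "(a::'a) \<in> Uq q" "b \<in> Uq q" shows "a \<noteq> phq q b"
proof
  assume ab: "a = phq q b"
  have "repq q a = repq q b" using ab repq_phq by simp
  hence "a = b" using assms unfolding Uq_def by simp
  hence "- (b ^ q) = b" using ab unfolding phq_def by simp
  hence "b + b ^ q = 0" by (metis add.left_inverse)
  thus False using assms(2) unfolding Uq_def trq_def by simp
qed
lemma U_cover: assumes "trq q (a::'a) \<noteq> 0" shows "a \<in> Uq q \<or> phq q a \<in> Uq q"
proof (cases "repq q a = a")
  case True thus ?thesis using assms unfolding Uq_def by simp
next
  case False
  hence "repq q a = phq q a" using repq_in[of a] by auto
  hence "repq q (phq q a) = phq q a" using repq_phq by simp
  moreover have "trq q (phq q a) \<noteq> 0" using assms trq_phq by simp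
  ultimately show ?thesis unfolding Uq_def by simp
qed
lemma key_ident: "trq q a * trq q b + (a - b) * (a - b) ^ q = (a + b ^ q) * (a + b ^ q) ^ q"
  for a b :: 'a
  unfolding trq_def fr_diff FA FI by (simp add: algebra_simps)
lemma key_nz: assumes "(a::'a) \<in> Uq q" "b \<in> Uq q"
  shows "trq q a * trq q b + (a - b) * (a - b) ^ q \<noteq> 0"
proof -
  have "a + b ^ q \<noteq> 0" using U_ph[OF assms] unfolding phq_def by (simp add: eq_neg_iff_add_eq_0)
  thus ?thesis unfolding key_ident using fr_eq0 by simp
qed
lemma norm_nz: "(e::'a) \<noteq> 0 \<Longrightarrow> e * e ^ q \<noteq> 0" using fr_eq0 by simp

end


definition dg :: "nat \<Rightarrow> 'a::field \<Rightarrow> nat \<Rightarrow> 'a" where "dg l s = (\<lambda>j. if Suc j = l then s else 0)"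
definition sg :: "'a::field \<times> 'a \<times> 'a \<Rightarrow> 'a" where "sg t = (case t of (x,y,z) \<Rightarrow> x + y + z)"
definition el :: "nat \<Rightarrow> nat \<Rightarrow> 'a \<times> 'a \<times> 'a \<Rightarrow> 'a::field mat" where
  "el q l t = (case t of (x,y,z) \<Rightarrow> mkm q (dg l (trq q (x+y+z))) x y z)"
definition Tset :: "nat \<Rightarrow> nat \<Rightarrow> ('a::field \<times> 'a \<times> 'a) set" where
  "Tset q l = (if l = 0 then {t. sg t \<notin> Uq q} else {t. sg t \<in> Uq q})"
definition code :: "nat \<Rightarrow> 'a::field mat set" where
  "code q = (\<Union>l\<in>{0,1,2,3}. el q l ` Tset q l)"

lemma mkm_inj: "mkm q d x y z = mkm q d' x' y' z' \<Longrightarrow> x = x' \<and> y = y' \<and> z = z' \<and> d 0 = d' 0 \<and> d 1 = d' 1 \<and> d 2 = d' 2"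
  by (metis mkm_idx)

context
  fixes q :: nat
  assumes FA: "\<And>x y::'a::field. (x + y) ^ q = x ^ q + y ^ q"
    and FI: "\<And>x::'a. (x ^ q) ^ q = x"
    and Q1: "q \<ge> 1"
begin

lemma mkm_herm: assumes "\<And>k. (d k) ^ q = (d k :: 'a)" shows "mkm q d x y z \<in> hermitian3 q"
  unfolding hermitian3_def
proof (intro CollectI conjI allI impI mkm_carrier)
  fix i j :: nat assume "i < 3" "j < 3"
  then show "mkm q d x y z $$ (j, i) = (mkm q d x y z $$ (i, j)) ^ q"
    using less3_cases[of i] less3_cases[of j] assms FI by (auto simp: mkm_idx mkm_idx')
qed

lemma el_herm: "el q l t \<in> hermitian3 (q) " for t :: "'a \<times> 'a \<times> 'a"
proof -
  obtain x y z where t: "t = (x,y,z)" by (cases t) auto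
  show ?thesis unfolding t el_def
    by (simp, rule mkm_herm) (simp add: dg_def trq_fix[OF FA FI Q1] fr_zero[OF FA FI Q1])
qed

lemma mkm_diff: "mkm q d x y z - mkm q d' x' y' z' = mkm q (\<lambda>k. d k - d' k) (x - x') (y - y') (z - z')"
  for x y z x' y' z' :: 'a
proof (rule eq_matI)
  show "dim_row (mkm q d x y z - mkm q d' x' y' z') = dim_row (mkm q (\<lambda>k. d k - d' k) (x - x') (y - y') (z - z'))"
    by (simp add: mkm_def)
  show "dim_col (mkm q d x y z - mkm q d' x' y' z') = dim_col (mkm q (\<lambda>k. d k - d' k) (x - x') (y - y') (z - z'))"
    by (simp add: mkm_def)
  fix i j assume ij: "i < dim_row (mkm q (\<lambda>k. d k - d' k) (x - x') (y - y') (z - z'))"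
     "j < dim_col (mkm q (\<lambda>k. d k - d' k) (x - x') (y - y') (z - z'))"
  hence "i < 3" "j < 3" by (simp_all add: mkm_def)
  thus "(mkm q d x y z - mkm q d' x' y' z') $$ (i, j) = mkm q (\<lambda>k. d k - d' k) (x - x') (y - y') (z - z') $$ (i, j)"
    using less3_cases[of i] less3_cases[of j] fr_diff[OF FA FI Q1]
    by (auto simp: mkm_idx mkm_def)
qed


lemma code_dist:
  assumes c1: "c1 \<in> code q" and c2: "c2 \<in> code q" and ne: "c1 \<noteq> (c2 :: 'a mat)"
  shows "2 \<le> rank_dist c1 c2"
proof -
  obtain l t where l: "l \<in> {0,1,2,3}" "t \<in> Tset q l" "c1 = el q l t" using c1 unfolding code_def by blast
  obtain l' t' where l': "l' \<in> {0,1,2,3}" "t' \<in> Tset q l'" "c2 = el q l' t'" using c2 unfolding code_def by blast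
  obtain x y z where t: "t = (x,y,z)" by (cases t) auto
  obtain x' y' z' where t': "t' = (x',y',z')" by (cases t') auto
  define u where "u = x + y + z"
  define v where "v = x' + y' + z'"
  define s where "s = trq q u"
  define s' where "s' = trq q v"
  have c1e: "c1 = mkm q (dg l s) x y z" using l(3) t by (simp add: el_def s_def u_def)
  have c2e: "c2 = mkm q (dg l' s') x' y' z'" using l'(3) t' by (simp add: el_def s'_def v_def)
  have D: "c1 - c2 = mkm q (\<lambda>k. dg l s k - dg l' s' k) (x - x') (y - y') (z - z')"
    unfolding c1e c2e by (rule mkm_diff)
  have mu: "l = 0 \<Longrightarrow> u \<notin> Uq q" "l \<noteq> 0 \<Longrightarrow> u \<in> Uq q"
    using l(2) t by (auto simp: Tset_def sg_def u_def)
  have mv: "l' = 0 \<Longrightarrow> v \<notin> Uq q" "l' \<noteq> 0 \<Longrightarrow> v \<in> Uq q"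
    using l'(2) t' by (auto simp: Tset_def sg_def v_def)
  have nx: "x \<noteq> x' \<Longrightarrow> (x - x') * (x - x') ^ q \<noteq> 0" by (rule norm_nz[OF FA FI Q1]) simp
  have ny: "y \<noteq> y' \<Longrightarrow> (y - y') * (y - y') ^ q \<noteq> 0" by (rule norm_nz[OF FA FI Q1]) simp
  have nz: "z \<noteq> z' \<Longrightarrow> (z - z') * (z - z') ^ q \<noteq> 0" by (rule norm_nz[OF FA FI Q1]) simp
  have key: "l \<noteq> 0 \<Longrightarrow> l' \<noteq> 0 \<Longrightarrow> s * s' + (u - v) * (u - v) ^ q \<noteq> 0"
    unfolding s_def s'_def using key_nz[OF FA FI Q1] mu mv by blast
  have kx: "l \<noteq> 0 \<Longrightarrow> l' \<noteq> 0 \<Longrightarrow> y = y' \<Longrightarrow> z = z' \<Longrightarrow> s * s' + (x - x') * (x - x') ^ q \<noteq> 0"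
    using key unfolding u_def v_def by simp
  have ky: "l \<noteq> 0 \<Longrightarrow> l' \<noteq> 0 \<Longrightarrow> x = x' \<Longrightarrow> z = z' \<Longrightarrow> s * s' + (y - y') * (y - y') ^ q \<noteq> 0"
    using key unfolding u_def v_def by simp
  have kz: "l \<noteq> 0 \<Longrightarrow> l' \<noteq> 0 \<Longrightarrow> x = x' \<Longrightarrow> y = y' \<Longrightarrow> s * s' + (z - z') * (z - z') ^ q \<noteq> 0"
    using key unfolding u_def v_def by simp
  have tne: "l = l' \<or> l = 0 \<or> l' = 0 \<Longrightarrow> \<not> (x = x' \<and> y = y' \<and> z = z')"
    using ne c1e c2e mu mv unfolding u_def v_def s_def s'_def by (auto simp: dg_def)
  let ?d = "\<lambda>k. dg l s k - dg l' s' k"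
  have "?d 0 * ?d 1 - (x - x') * (x - x') ^ q \<noteq> 0 \<or> ?d 0 * ?d 2 - (y - y') * (y - y') ^ q \<noteq> 0
      \<or> ?d 1 * ?d 2 - (z - z') * (z - z') ^ q \<noteq> 0"
    using l(1) l'(1) nx ny nz kx ky kz tne
    by (cases "x = x'"; cases "y = y'"; cases "z = z'"; auto simp: dg_def algebra_simps)
  hence "2 \<le> vec_space.rank 3 (c1 - c2)" unfolding D by (rule rank_mkm)
  thus ?thesis unfolding rank_dist_def .
qed


lemma code_herm: "code q \<subseteq> (hermitian3 q :: 'a mat set)"
  unfolding code_def using el_herm by blast

lemma witness:
  "\<exists>w1\<in>code q. \<exists>w2\<in>code q. w1 \<noteq> w2 \<and> rank_dist w1 w2 = 2 \<and> (w1 :: 'a mat) \<in> code q"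
proof -
  have one: "(1::'a) ^ q = 1" by simp
  have "phq q (1::'a) = -1" unfolding phq_def by simp
  obtain e :: 'a where e: "e \<noteq> 0" "e \<notin> Uq q"
  proof (cases "(1::'a) \<in> Uq q")
    case True
    have "(-1::'a) \<notin> Uq q"
    proof
      assume "(-1::'a) \<in> Uq q"
      from U_ph[OF FA FI Q1 this True] show False unfolding phq_def by simp
    qed
    thus ?thesis using that[of "-1"] by simp
  next
    case False thus ?thesis using that[of 1] by simp
  qed
  have z: "(0::'a) \<notin> Uq q" unfolding Uq_def trq_def using fr_zero[OF FA FI Q1] by simp
  define w1 where "w1 = el q 0 (e, 0::'a, 0::'a)"
  define w2 where "w2 = el q 0 (0::'a, 0::'a, 0::'a)"
  have m1: "w1 \<in> code q" unfolding w1_def code_def Tset_def sg_def using e by auto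
  have m2: "w2 \<in> code q" unfolding w2_def code_def Tset_def sg_def using z by auto
  have w1e: "w1 = mkm q (dg 0 (trq q e)) e 0 0" unfolding w1_def el_def by simp
  have w2e: "w2 = mkm q (dg 0 (trq q 0)) 0 0 0" unfolding w2_def el_def by simp
  have D: "w1 - w2 = mkm q (\<lambda>k. 0) e 0 0"
    unfolding w1e w2e mkm_diff by (simp add: dg_def)
  have ne: "w1 \<noteq> w2" using mkm_inj[of q _ e 0 0 _ 0 0 0] e w1e w2e by auto
  have ge: "2 \<le> vec_space.rank 3 (w1 - w2)" unfolding D
    by (rule rank_mkm) (use norm_nz[OF FA FI Q1 e(1)] in simp)
  have "det (mkm q (\<lambda>k. 0) e (0::'a) 0) = (\<Sum>j<3. mkm q (\<lambda>k. 0) e (0::'a) 0 $$ (2,j) * cofactor (mkm q (\<lambda>k. 0) e 0 0) 2 j)"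
    by (rule laplace_expansion_row[OF mkm_carrier]) simp
  also have "\<dots> = 0"
    by (simp add: numeral_3_eq_3 mkm_idx mkm_idx' fr_zero[OF FA FI Q1] lessThan_Suc)
  finally have "det (w1 - w2) = 0" unfolding D .
  moreover have C: "w1 - w2 \<in> carrier_mat 3 3" unfolding D by (rule mkm_carrier)
  ultimately have "vec_space.rank 3 (w1 - w2) \<noteq> 3"
    using vec_space.det_rank_iff[OF C] by auto
  moreover have "vec_space.rank 3 (w1 - w2) \<le> 3"
    using vec_space.rank_le_nc[OF C] .
  ultimately have "rank_dist w1 w2 = 2" using ge unfolding rank_dist_def by linarith
  thus ?thesis using m1 m2 ne by blast
qed


lemma trq_zero_bound: assumes "q \<ge> 2" shows "card {a::'a. trq q a = 0} \<le> q"
proof -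
  define P :: "'a poly" where "P = Polynomial.monom 1 q + [:0, 1:]"
  have dP: "degree P = q" unfolding P_def
    using assms by (subst degree_add_eq_left) (auto simp: degree_monom_eq)
  hence "P \<noteq> 0" using assms by auto
  have "{a::'a. trq q a = 0} = {a. poly P a = 0}"
    unfolding P_def trq_def by (auto simp: poly_monom add.commute)
  thus ?thesis using card_poly_roots_bound[OF \<open>P \<noteq> 0\<close>] dP by simp
qed

end

lemma card_U2:
  fixes q :: nat
  assumes FA: "\<And>x y::'a::{finite,field}. (x + y) ^ q = x ^ q + y ^ q"
    and FI: "\<And>x::'a. (x ^ q) ^ q = x"
    and Q1: "q \<ge> 1"
  shows "card {a::'a. trq q a \<noteq> 0} = 2 * card (Uq q :: 'a set)"
proof -
  have eq: "{a::'a. trq q a \<noteq> 0} = Uq q \<union> phq q ` Uq q"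
  proof (intro equalityI subsetI)
    fix a :: 'a assume "a \<in> {a. trq q a \<noteq> 0}"
    hence "a \<in> Uq q \<or> phq q a \<in> Uq q" using U_cover[OF FA FI Q1] by simp
    thus "a \<in> Uq q \<union> phq q ` Uq q" using phq_phq[OF FA FI Q1, of a] by (metis UnI1 UnI2 image_eqI)
  next
    fix a :: 'a assume "a \<in> Uq q \<union> phq q ` Uq q"
    thus "a \<in> {a. trq q a \<noteq> 0}" using U_tr[OF FA FI Q1] trq_phq[OF FA FI Q1] by auto
  qed
  have disj: "Uq q \<inter> phq q ` Uq q = ({} :: 'a set)" using U_ph[OF FA FI Q1] by blast
  have inj: "inj_on (phq q :: 'a \<Rightarrow> 'a) (Uq q)" by (metis inj_onI phq_phq[OF FA FI Q1])
  have fin: "finite (Uq q :: 'a set)" by simp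
  show ?thesis unfolding eq using card_Un_disjoint[OF fin finite_imageI[OF fin] disj] card_image[OF inj] by simp
qed


lemma card_sg: "card {t::'a::{finite,field} \<times> 'a \<times> 'a. sg t \<in> S} = card (UNIV::'a set) * card (UNIV::'a set) * card S"
proof -
  have "bij_betw (\<lambda>(x,y,a). (x,y,a-x-y)) (UNIV \<times> UNIV \<times> S) {t::'a \<times> 'a \<times> 'a. sg t \<in> S}"
    by (rule bij_betwI[where g = "\<lambda>(x,y,z). (x,y,x+y+z)"]) (auto simp: sg_def)
  hence "card ((UNIV::'a set) \<times> (UNIV::'a set) \<times> S) = card {t::'a \<times> 'a \<times> 'a. sg t \<in> S}" by (rule bij_betw_same_card)
  thus ?thesis by (simp add: card_cartesian_product)
qed

lemma arith_final:
  fixes q u :: nat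
  assumes "q \<ge> 2" "q^2 - q \<le> 2*u" "u \<le> q^2"
  shows "q^6 + q*(q-1)*(q^4+q^2+1) div 2 \<le> q^2*q^2*(q^2 - u) + 3*(q^2*q^2*u)"
proof -
  have r: "q^2*q^2*(q^2 - u) + 3*(q^2*q^2*u) = q^6 + 2*(q^4*u)"
  proof -
    have "q^2*q^2*(q^2 - u) + q^2*q^2*u = q^2*q^2*q^2" using assms(3)
      by (metis add_diff_inverse_nat diff_mult_distrib2 less_imp_le_nat not_le add.commute le_add_diff_inverse2 distrib_left)
    thus ?thesis by (simp add: power_add[symmetric] numeral_eq_Suc algebra_simps)
  qed
  have q4: "q^4 + q^2 + 1 \<le> 2 * q^4"
  proof -
    have q24: "q^2 \<ge> 4" using assms(1) by (metis power2_nat_le_eq_le numeral_le_iff semiring_norm(69) power2_eq_square num_double mult_2 numeral_Bit0 one_add_one) 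
    hence "4 * q^2 \<le> q^2 * q^2" by (intro mult_right_mono) simp_all
    hence "q^4 \<ge> 4 * q^2" by (simp add: power_add[symmetric])
    thus ?thesis using q24 by linarith
  qed
  have m: "q*(q-1) = q^2 - q" by (simp add: power2_eq_square diff_mult_distrib2)
  have "q*(q-1)*(q^4+q^2+1) \<le> (q^2 - q) * (2*q^4)" unfolding m by (rule mult_left_mono[OF q4]) simp
  hence "q*(q-1)*(q^4+q^2+1) div 2 \<le> (q^2 - q) * q^4" by simp
  also have "\<dots> \<le> 2*u*q^4" using assms(2) by (rule mult_right_mono) simp
  finally show ?thesis unfolding r by (simp add: mult.commute mult.left_commute)
qed


lemma card_code:
  fixes q :: nat
  assumes FA: "\<And>x y::'a::{finite,field}. (x + y) ^ q = x ^ q + y ^ q"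
    and FI: "\<And>x::'a. (x ^ q) ^ q = x"
    and Q1: "q \<ge> 1"
  shows "card (code q :: 'a mat set) = card (UNIV::'a set) * card (UNIV::'a set) * (card (UNIV::'a set) - card (Uq q :: 'a set))
           + 3 * (card (UNIV::'a set) * card (UNIV::'a set) * card (Uq q :: 'a set))"
proof -
  let ?A = "\<lambda>l. el q l ` Tset q l :: 'a mat set"
  have inj: "inj_on (el q l) (Tset q l :: ('a \<times> 'a \<times> 'a) set)" for l
  proof (rule inj_onI)
    fix t t' :: "'a \<times> 'a \<times> 'a" assume a: "el q l t = el q l t'"
    obtain x y z where t: "t = (x,y,z)" by (cases t) auto
    obtain x' y' z' where t': "t' = (x',y',z')" by (cases t') auto
    have "mkm q (dg l (trq q (x+y+z))) x y z = mkm q (dg l (trq q (x'+y'+z'))) x' y' z'"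
      using a t t' by (simp add: el_def)
    from mkm_inj[OF this] show "t = t'" using t t' by simp
  qed
  have disj: "?A l \<inter> ?A l' = {}" if "l \<in> {0,1,2,3}" "l' \<in> {0,1,2,3}" "l \<noteq> l'" for l l'
  proof (rule ccontr)
    assume "?A l \<inter> ?A l' \<noteq> {}"
    then obtain t t' :: "'a \<times> 'a \<times> 'a" where tt: "t \<in> Tset q l" "t' \<in> Tset q l'" "el q l t = el q l' t'" by blast
    obtain x y z where t: "t = (x,y,z)" by (cases t) auto
    obtain x' y' z' where t': "t' = (x',y',z')" by (cases t') auto
    have eq: "mkm q (dg l (trq q (x+y+z))) x y z = mkm q (dg l' (trq q (x'+y'+z'))) x' y' z'"
      using tt(3) t t' by (simp add: el_def)
    from mkm_inj[OF eq] have e: "x = x'" "y = y'" "z = z'"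
      "dg l (trq q (x+y+z)) 0 = dg l' (trq q (x'+y'+z')) 0"
      "dg l (trq q (x+y+z)) 1 = dg l' (trq q (x'+y'+z')) 1"
      "dg l (trq q (x+y+z)) 2 = dg l' (trq q (x'+y'+z')) 2" by auto
    have m: "l \<noteq> 0 \<Longrightarrow> trq q (x+y+z) \<noteq> 0" "l' \<noteq> 0 \<Longrightarrow> trq q (x'+y'+z') \<noteq> 0"
      using tt(1,2) t t' U_tr[OF FA FI Q1] by (auto simp: Tset_def sg_def)
    show False using that e m by (auto simp: dg_def)
  qed
  have "card (code q :: 'a mat set) = (\<Sum>l\<in>{0,1,2,3}. card (?A l))"
    unfolding code_def by (rule card_UN_disjoint) (use disj in auto)
  also have "\<dots> = (\<Sum>l\<in>{0,1,2,3::nat}. card (Tset q l :: ('a \<times> 'a \<times> 'a) set))"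
    using card_image[OF inj] by simp
  also have "\<dots> = card (Tset q 0 :: ('a \<times> 'a \<times> 'a) set) + 3 * card (Tset q 1 :: ('a \<times> 'a \<times> 'a) set)"
    by (simp add: Tset_def)
  also have "card (Tset q 0 :: ('a \<times> 'a \<times> 'a) set) = card (UNIV::'a set) * card (UNIV::'a set) * card (- Uq q :: 'a set)"
    unfolding Tset_def using card_sg[of "- Uq q"] by simp
  also have "card (- Uq q :: 'a set) = card (UNIV::'a set) - card (Uq q :: 'a set)"
    by (simp add: Compl_eq_Diff_UNIV card_Diff_subset)
  also have "card (Tset q 1 :: ('a \<times> 'a \<times> 'a) set) = card (UNIV::'a set) * card (UNIV::'a set) * card (Uq q :: 'a set)"
    unfolding Tset_def using card_sg[of "Uq q"] by simp
  finally show ?thesis .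
qed

theorem mainTheorem9:
  fixes q :: nat
  assumes "\<exists>p k. prime p \<and> k \<ge> 1 \<and> q = p ^ k"
    and "card (UNIV :: 'a::{finite,field} set) = q ^ 2"
  shows "\<exists>C :: 'a mat set. is_herm_code q 2 C \<and>
           card C = q ^ 6 + q * (q - 1) * (q ^ 4 + q ^ 2 + 1) div 2"
proof -
  obtain p k where pk: "prime p" "k \<ge> 1" "q = p ^ k" using assms(1) by blast
  note ff = frob_facts[OF pk assms(2)]
  have FA: "\<And>x y::'a. (x + y) ^ q = x ^ q + y ^ q" using ff(1) by blast
  have FI: "\<And>x::'a. (x ^ q) ^ q = x" using ff(2) by blast
  have q2: "q \<ge> 2" using ff(3) .
  hence Q1: "q \<ge> 1" by simp
  define N where "N = q ^ 6 + q * (q - 1) * (q ^ 4 + q ^ 2 + 1) div 2"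
  define u where "u = card (Uq q :: 'a set)"
  have uq: "u \<le> q^2" unfolding u_def using card_mono[of "UNIV::'a set" "Uq q"] assms(2) by simp
  have z: "card {a::'a. trq q a = 0} \<le> q" by (rule trq_zero_bound[OF FA FI Q1 q2])
  have "card {a::'a. trq q a \<noteq> 0} = card (UNIV::'a set) - card {a::'a. trq q a = 0}"
  proof -
    have "{a::'a. trq q a \<noteq> 0} = UNIV - {a. trq q a = 0}" by auto
    thus ?thesis by (simp add: card_Diff_subset)
  qed
  hence "2 * u \<ge> q^2 - q" using card_U2[OF FA FI Q1] z assms(2) unfolding u_def by simp
  hence NC: "N \<le> card (code q :: 'a mat set)"
    unfolding N_def card_code[OF FA FI Q1] assms(2) u_def[symmetric]
    using arith_final[OF q2 _ uq] by simp
  obtain w1 w2 where w: "w1 \<in> (code q :: 'a mat set)" "w2 \<in> (code q :: 'a mat set)" "w1 \<noteq> w2" "rank_dist w1 w2 = 2"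
    using witness[OF FA FI Q1] by blast
  have N2: "N \<ge> 2"
  proof -
    have "q ^ 6 \<ge> 2 ^ 6" using q2 by (rule power_mono) simp
    thus ?thesis unfolding N_def by simp
  qed
  have fc: "finite (code q :: 'a mat set)" unfolding code_def by simp
  have "card (code q - {w1, w2}) = card (code q :: 'a mat set) - 2"
    using w fc by (simp add: card_Diff_subset)
  hence "N - 2 \<le> card (code q - {w1, w2})" using NC by simp
  then obtain T where T: "T \<subseteq> code q - {w1, w2}" "card T = N - 2" "finite T"
    by (rule obtain_subset_with_card_n)
  define C where "C = insert w1 (insert w2 T)"
  have Csub: "C \<subseteq> code q" using T w unfolding C_def by auto
  have nT: "w1 \<notin> T" "w2 \<notin> T" using T(1) by auto
  have "card C = Suc (Suc (card T))" unfolding C_def using nT T(3) w(3) by simp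
  hence cardC: "card C = N" using T(2) N2 by simp
  have "is_herm_code q 2 C"
    unfolding is_herm_code_def
  proof (intro conjI)
    show "C \<noteq> {}" unfolding C_def by simp
    show "C \<subseteq> hermitian3 q" using Csub code_herm[OF FA FI Q1] by blast
    show "\<forall>c1\<in>C. \<forall>c2\<in>C. c1 \<noteq> c2 \<longrightarrow> 2 \<le> rank_dist c1 c2"
      using Csub code_dist[OF FA FI Q1] by blast
    show "\<exists>c1\<in>C. \<exists>c2\<in>C. c1 \<noteq> c2 \<and> rank_dist c1 c2 = 2"
      using w unfolding C_def by blast
  qed
  thus ?thesis using cardC unfolding N_def by blast
qed

end
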